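(* We have \[ n_q(k,s)=\sum_{i=1}^{s} q^{(s-i)(k-i-s+1)}\genfrac{[}{]}{0pt}{}{s-1}{i-1}_q\genfrac{[}{]}{0pt}{}{k-s}{i}_q. \]
   Context: $q$ is a prime power. For a $(k - s)$-dimensional affine subspace $H$ of $\mathbb{F}_q^k$ not passing through the origin, $n_q(k,s)$ denotes the number of $s$-dimensional affine subspaces through the origin that are disjoint from $H$ (this is independent of the choice of $H$). For integers $0 \leq s \leq k$, the $q$-binomial (Gaussian) coefficient is $\genfrac{[}{]}{0pt}{}{k}{s}_q = \frac{(q^k - 1) \cdots (q^{k - s+ 1} - 1)}{(q^s - 1) \cdots (q - 1)}$ (empty product equal to $1$), and it is defined to be $0$ for other values of $s,k$. *)

theory Defs
  imports "HOL-Analysis.Analysis"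
begin

definition qbinom :: "real \<Rightarrow> nat \<Rightarrow> nat \<Rightarrow> real" where
  "qbinom q k s = (if s \<le> k then
      (\<Prod>j<s. q ^ (k - j) - 1) / (\<Prod>j<s. q ^ (s - j) - 1) else 0)"

definition affine_subspace_dim :: "('a::field ^ 'n) set \<Rightarrow> nat \<Rightarrow> bool" where
  "affine_subspace_dim H d \<longleftrightarrow>
     (\<exists>x W. vec.subspace W \<and> vec.dim W = d \<and> H = (\<lambda>w. x + w) ` W)"

definition n_count :: "('a::field ^ 'n) set \<Rightarrow> nat \<Rightarrow> nat" where
  "n_count H s = card {V :: ('a ^ 'n) set. vec.subspace V \<and> vec.dim V = s \<and> V \<inter> H = {}}"

end

theory Submission
  imports Defs
begin

lemma card_span_insert:
  fixes v :: "'a::{field,finite}^'n" and X :: "('a^'n) set"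
  assumes "v \<notin> vec.span X"
  shows "card (vec.span (insert v X)) = CARD('a) * card (vec.span X)"
proof -
  let ?f = "\<lambda>(c::'a, w). c *s v + w"
  have inj: "inj_on ?f (UNIV \<times> vec.span X)"
  proof (rule inj_onI, clarsimp)
    fix c w c' w'
    assume w: "w \<in> vec.span X" and w': "w' \<in> vec.span X" and eq: "c *s v + w = c' *s v + w'"
    show "c = c' \<and> w = w'"
    proof (cases "c = c'")
      case True then show ?thesis using eq by simp
    next
      case False
      have "(c - c') *s v = w' - w" using eq by (simp add: algebra_simps vector_sadd_rdistrib vector_ssub_ldistrib)
      then have e2: "inverse (c - c') *s ((c - c') *s v) = inverse (c - c') *s (w' - w)" by simp
      have "v = (inverse (c - c') * (c - c')) *s v" using False by simp
      also have "\<dots> = inverse (c - c') *s ((c - c') *s v)" by (simp only: vector_smult_assoc)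
      finally have "v = inverse (c - c') *s (w' - w)" using e2 by simp
      then have "v \<in> vec.span X" using w w' by (simp add: vec.span_diff vec.span_scale)
      then show ?thesis using assms by simp
    qed
  qed
  have img: "?f ` (UNIV \<times> vec.span X) = vec.span (insert v X)"
  proof
    show "?f ` (UNIV \<times> vec.span X) \<subseteq> vec.span (insert v X)"
    proof clarsimp
      fix a b assume "b \<in> vec.span X"
      then have "a *s v + b - a *s v \<in> vec.span X" by simp
      then show "a *s v + b \<in> vec.span (insert v X)" unfolding vec.span_insert by blast
    qed
    show "vec.span (insert v X) \<subseteq> ?f ` (UNIV \<times> vec.span X)"
    proof
      fix y assume "y \<in> vec.span (insert v X)"
      then obtain k where k: "y - k *s v \<in> vec.span X" by (auto simp: vec.span_insert)
      have "y = ?f (k, y - k *s v)" by simp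
      then show "y \<in> ?f ` (UNIV \<times> vec.span X)" using k by blast
    qed
  qed
  have "card (vec.span (insert v X)) = card ((UNIV::'a set) \<times> vec.span X)"
    using card_image[OF inj] unfolding img by simp
  also have "\<dots> = CARD('a) * card (vec.span X)" by (simp add: card_cartesian_product)
  finally show ?thesis .
qed

lemma card_span_indep:
  fixes B :: "('a::{field,finite}^'n) set"
  assumes "vec.independent B"
  shows "card (vec.span B) = CARD('a) ^ card B"
proof -
  have "finite B" by simp
  then show ?thesis using assms
  proof (induction B rule: finite_induct)
    case empty then show ?case by simp
  next
    case (insert b F)
    have indF: "vec.independent F" using insert.prems vec.independent_mono by blast
    have "b \<notin> vec.span F" using insert.prems insert.hyps(2) vec.independent_insert[of b F] by simp
    then show ?case using card_span_insert[OF \<open>b \<notin> vec.span F\<close>] insert.IH[OF indF] insert.hyps by simp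
  qed
qed

lemma card_subspace:
  fixes S :: "('a::{field,finite}^'n) set"
  assumes "vec.subspace S"
  shows "card S = CARD('a) ^ vec.dim S"
proof -
  obtain B where B: "B \<subseteq> S" "vec.independent B" "S \<subseteq> vec.span B" "card B = vec.dim S"
    using vec.basis_exists by blast
  have "vec.span B = S" using B assms by (meson vec.span_minimal subset_antisym)
  then show ?thesis using card_span_indep[OF B(2)] B(4) by simp
qed


lemma span_sub_eq: "vec.subspace (S :: ('a::field^'n) set) \<Longrightarrow> vec.span S = S"
  using vec.span_eq_iff by blast

fun indep_over :: "('a::field^'n) set \<Rightarrow> ('a^'n) list \<Rightarrow> bool" where
  "indep_over S [] = True"
| "indep_over S (v # L) = (v \<notin> vec.span (S \<union> set L) \<and> indep_over S L)"

lemma dim_indep_over: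
  fixes S :: "('a::field^'n) set"
  assumes "indep_over S L"
  shows "vec.dim (S \<union> set L) = vec.dim S + length L"
  using assms
proof (induction L)
  case Nil then show ?case by simp
next
  case (Cons v L)
  have "S \<union> set (v # L) = insert v (S \<union> set L)" by auto
  then show ?case using Cons vec.dim_insert[of v "S \<union> set L"] by simp
qed

lemma indep_over_mono:
  fixes S :: "('a::field^'n) set"
  assumes "S \<subseteq> S'" "indep_over S' L"
  shows "indep_over S L"
  using assms(2)
proof (induction L)
  case Nil then show ?case by simp
next
  case (Cons v L)
  have "vec.span (S \<union> set L) \<subseteq> vec.span (S' \<union> set L)"
    using assms(1) by (intro vec.span_mono) auto
  then show ?case using Cons by auto
qed

lemma count_indep_lists:
  fixes S B :: "('a::{field,finite}^'n) set"
  assumes S: "vec.subspace S" and B: "vec.subspace B" and SB: "S \<subseteq> B"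
  shows "card {L. length L = r \<and> set L \<subseteq> B \<and> indep_over S L}
    = (\<Prod>j<r. CARD('a) ^ vec.dim B - CARD('a) ^ (vec.dim S + j))"
proof (induction r)
  case 0
  have "{L. length L = 0 \<and> set L \<subseteq> B \<and> indep_over S L} = {[]}" by auto
  then show ?case by simp
next
  case (Suc r)
  let ?q = "CARD('a)"
  let ?A = "{L. length L = r \<and> set L \<subseteq> B \<and> indep_over S L}"
  let ?C = "\<lambda>L. B - vec.span (S \<union> set L)"
  have eq: "{L. length L = Suc r \<and> set L \<subseteq> B \<and> indep_over S L}
      = (\<lambda>(L, v). v # L) ` (Sigma ?A ?C)"
  proof
    show "{L. length L = Suc r \<and> set L \<subseteq> B \<and> indep_over S L} \<subseteq> (\<lambda>(L, v). v # L) ` (Sigma ?A ?C)"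
    proof
      fix L assume "L \<in> {L. length L = Suc r \<and> set L \<subseteq> B \<and> indep_over S L}"
      then obtain v L' where "L = v # L'" "length L' = r" "set L' \<subseteq> B" "v \<in> B" "indep_over S L'"
        "v \<notin> vec.span (S \<union> set L')"
        by (cases L) auto
      then show "L \<in> (\<lambda>(L, v). v # L) ` (Sigma ?A ?C)" by force
    qed
  qed auto
  have inj: "inj_on (\<lambda>(L, v). v # L) (Sigma ?A ?C)" by (auto simp: inj_on_def)
  have fin: "finite ?A"
    by (rule finite_subset[of _ "{L. set L \<subseteq> UNIV \<and> length L = r}"]) (use finite_lists_length_eq[of "UNIV::('a^'n) set" r] in auto)
  have cC: "card (?C L) = ?q ^ vec.dim B - ?q ^ (vec.dim S + r)" if "L \<in> ?A" for L
  proof -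
    have sub: "vec.span (S \<union> set L) \<subseteq> B" using that SB B by (intro vec.span_minimal) auto
    have "card (vec.span (S \<union> set L)) = ?q ^ (vec.dim S + r)"
      using card_subspace[of "vec.span (S \<union> set L)"] dim_indep_over[of S L] that by simp
    moreover have "card B = ?q ^ vec.dim B" using card_subspace[OF B] .
    ultimately show ?thesis using sub by (simp add: card_Diff_subset)
  qed
  have "card {L. length L = Suc r \<and> set L \<subseteq> B \<and> indep_over S L} = card (Sigma ?A ?C)"
    unfolding eq using card_image[OF inj] .
  also have "\<dots> = (\<Sum>L\<in>?A. card (?C L))" using fin by (simp add: card_SigmaI)
  also have "\<dots> = (\<Sum>L\<in>?A. ?q ^ vec.dim B - ?q ^ (vec.dim S + r))" using cC by simp
  also have "\<dots> = card ?A * (?q ^ vec.dim B - ?q ^ (vec.dim S + r))" by simp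
  also have "\<dots> = (\<Prod>j<Suc r. ?q ^ vec.dim B - ?q ^ (vec.dim S + j))" using Suc.IH by simp
  finally show ?case .
qed


lemma inter_indep_over:
  fixes T U :: "('a::field^'n) set"
  assumes T: "vec.subspace T" and U: "vec.subspace U" and TU: "T \<subseteq> U"
    and L: "indep_over U L"
  shows "vec.span (T \<union> set L) \<inter> U = T"
  using L
proof (induction L)
  case Nil then show ?case using T TU by (auto simp: span_sub_eq)
next
  case (Cons v L)
  have IH: "vec.span (T \<union> set L) \<inter> U = T" using Cons by simp
  have nv: "v \<notin> vec.span (U \<union> set L)" using Cons.prems by simp
  show ?case
  proof
    show "vec.span (T \<union> set (v # L)) \<inter> U \<subseteq> T"
    proof
      fix x assume x: "x \<in> vec.span (T \<union> set (v # L)) \<inter> U"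
      have "T \<union> set (v # L) = insert v (T \<union> set L)" by auto
      then obtain k where k: "x - k *s v \<in> vec.span (T \<union> set L)"
        using x vec.span_insert[of v "T \<union> set L"] by auto
      show "x \<in> T"
      proof (cases "k = 0")
        case True
        then show ?thesis using k x IH by auto
      next
        case False
        have sp: "vec.span (T \<union> set L) \<subseteq> vec.span (U \<union> set L)" using TU by (intro vec.span_mono) auto
        have xU: "x \<in> vec.span (U \<union> set L)" using x by (auto intro: vec.span_base)
        have "x - (x - k *s v) \<in> vec.span (U \<union> set L)" using k sp xU by (meson subsetD vec.span_diff)
        then have "k *s v \<in> vec.span (U \<union> set L)" by simp
        then have "inverse k *s (k *s v) \<in> vec.span (U \<union> set L)" by (rule vec.span_scale)
        then have "v \<in> vec.span (U \<union> set L)" using False by (simp add: vector_smult_assoc)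
        then show ?thesis using nv by simp
      qed
    qed
    show "T \<subseteq> vec.span (T \<union> set (v # L)) \<inter> U" using TU by (auto intro: vec.span_base)
  qed
qed

lemma modular_span:
  fixes V U :: "('a::field^'n) set"
  assumes V: "vec.subspace V" and U: "vec.subspace U" and L: "set L \<subseteq> V" and x: "x \<in> V"
  shows "x \<in> vec.span (U \<union> set L) \<longleftrightarrow> x \<in> vec.span ((V \<inter> U) \<union> set L)"
proof
  assume "x \<in> vec.span (U \<union> set L)"
  then obtain a b where ab: "x = a + b" "a \<in> vec.span U" "b \<in> vec.span (set L)"
    unfolding vec.span_Un by blast
  have aU: "a \<in> U" using ab U by (simp add: span_sub_eq)
  have bV: "b \<in> V" using ab(3) L V by (meson vec.span_minimal subsetD)
  have "a = x - b" using ab by simp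
  then have aV: "a \<in> V" using x bV V by (simp add: vec.subspace_diff)
  have "a \<in> vec.span ((V \<inter> U) \<union> set L)" using aU aV by (auto intro: vec.span_base)
  moreover have "b \<in> vec.span ((V \<inter> U) \<union> set L)"
    using ab(3) vec.span_mono[of "set L" "(V \<inter> U) \<union> set L"] by auto
  ultimately show "x \<in> vec.span ((V \<inter> U) \<union> set L)" using ab(1) by (simp add: vec.span_add)
next
  assume "x \<in> vec.span ((V \<inter> U) \<union> set L)"
  then show "x \<in> vec.span (U \<union> set L)"
    using vec.span_mono[of "(V \<inter> U) \<union> set L" "U \<union> set L"] by auto
qed

lemma indep_over_modular:
  fixes V U :: "('a::field^'n) set"
  assumes V: "vec.subspace V" and U: "vec.subspace U" and L: "set L \<subseteq> V"
  shows "indep_over U L \<longleftrightarrow> indep_over (V \<inter> U) L"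
  using L
proof (induction L)
  case Nil then show ?case by simp
next
  case (Cons v L)
  then show ?case using modular_span[OF V U, of L v] by simp
qed


lemma card_fibers:
  assumes "finite S" "finite T" "g ` S \<subseteq> T"
  shows "card S = (\<Sum>y\<in>T. card {x\<in>S. g x = y})"
  using sum.group[OF assms, of "\<lambda>_. 1::nat"] by simp

lemma count_subspaces:
  fixes A U T :: "('a::{field,finite}^'n) set"
  assumes A: "vec.subspace A" and U: "vec.subspace U" and UA: "U \<subseteq> A"
    and T: "vec.subspace T" and TU: "T \<subseteq> U"
  shows "card {V. vec.subspace V \<and> V \<subseteq> A \<and> vec.dim V = vec.dim T + r \<and> V \<inter> U = T}
      * (\<Prod>j<r. CARD('a) ^ (vec.dim T + r) - CARD('a) ^ (vec.dim T + j))
    = (\<Prod>j<r. CARD('a) ^ vec.dim A - CARD('a) ^ (vec.dim U + j))"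
proof -
  let ?q = "CARD('a)"
  define Ls where "Ls = {L. length L = r \<and> set L \<subseteq> A \<and> indep_over U L}"
  define Tg where "Tg = {V. vec.subspace V \<and> V \<subseteq> A \<and> vec.dim V = vec.dim T + r \<and> V \<inter> U = T}"
  define P where "P = (\<Prod>j<r. ?q ^ (vec.dim T + r) - ?q ^ (vec.dim T + j))"
  let ?phi = "\<lambda>L. vec.span (T \<union> set L)"
  have cLs: "card Ls = (\<Prod>j<r. ?q ^ vec.dim A - ?q ^ (vec.dim U + j))"
    unfolding Ls_def by (rule count_indep_lists[OF U A UA])
  have dimphi: "vec.dim (?phi L) = vec.dim T + r" if "length L = r" "indep_over U L" for L
    using dim_indep_over[OF indep_over_mono[OF TU that(2)]] that(1) by simp
  have maps: "?phi ` Ls \<subseteq> Tg"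
  proof
    fix V assume "V \<in> ?phi ` Ls"
    then obtain L where L: "L \<in> Ls" "V = ?phi L" by blast
    have "T \<union> set L \<subseteq> A" using L TU UA unfolding Ls_def by auto
    then have "V \<subseteq> A" using L(2) vec.span_minimal[OF _ A] by blast
    moreover have "vec.dim V = vec.dim T + r" using L dimphi unfolding Ls_def by auto
    moreover have "V \<inter> U = T" using L inter_indep_over[OF T U TU] unfolding Ls_def by auto
    ultimately show "V \<in> Tg" unfolding Tg_def using L by auto
  qed
  have cfib: "card {L\<in>Ls. ?phi L = V} = P" if V: "V \<in> Tg" for V
  proof -
    have Vs: "vec.subspace V" and VA: "V \<subseteq> A" and dV: "vec.dim V = vec.dim T + r" and VU: "V \<inter> U = T"
      using V unfolding Tg_def by auto
    have "{L\<in>Ls. ?phi L = V} = {L. length L = r \<and> set L \<subseteq> V \<and> indep_over T L}"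
    proof
      show "{L\<in>Ls. ?phi L = V} \<subseteq> {L. length L = r \<and> set L \<subseteq> V \<and> indep_over T L}"
        using indep_over_mono[OF TU] vec.span_superset unfolding Ls_def by fastforce
      show "{L. length L = r \<and> set L \<subseteq> V \<and> indep_over T L} \<subseteq> {L\<in>Ls. ?phi L = V}"
      proof
        fix L assume "L \<in> {L. length L = r \<and> set L \<subseteq> V \<and> indep_over T L}"
        then have L: "length L = r" "set L \<subseteq> V" "indep_over T L" by auto
        have iU: "indep_over U L" using indep_over_modular[OF Vs U L(2)] L(3) VU by simp
        have "T \<union> set L \<subseteq> V" using L(2) VU by auto
        then have sub: "?phi L \<subseteq> V" using vec.span_minimal[OF _ Vs] by blast
        have "?phi L = V"
          using vec.subspace_dim_equal[of "?phi L" V] sub Vs dimphi[OF L(1) iU] dV by simp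
        then show "L \<in> {L\<in>Ls. ?phi L = V}" using L(1,2) VA iU unfolding Ls_def by auto
      qed
    qed
    moreover have "T \<subseteq> V" using VU by auto
    ultimately show ?thesis
      using count_indep_lists[OF T Vs, of r] dV unfolding P_def by simp
  qed
  have finLs: "finite Ls" unfolding Ls_def
    by (rule finite_subset[of _ "{L. set L \<subseteq> UNIV \<and> length L = r}"]) (use finite_lists_length_eq[of "UNIV::('a^'n) set" r] in auto)
  have finTg: "finite Tg" by (rule finite_subset[OF subset_UNIV]) simp
  have "card Ls = (\<Sum>V\<in>Tg. card {L\<in>Ls. ?phi L = V})"
    by (rule card_fibers[OF finLs finTg maps])
  also have "\<dots> = card Tg * P" using cfib by simp
  finally show ?thesis using cLs unfolding Tg_def P_def by simp
qed


definition qfac :: "real \<Rightarrow> nat \<Rightarrow> real" where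
  "qfac Q n = (\<Prod>j<n. Q ^ (j + 1) - 1)"

lemma qfac_pos: "Q \<ge> 2 \<Longrightarrow> qfac Q n > 0"
  unfolding qfac_def
proof (intro prod_pos ballI)
  fix j assume "Q \<ge> 2"
  then have "1 < Q ^ (j + 1)" by (intro one_less_power) auto
  then show "0 < Q ^ (j + 1) - 1" by simp
qed

lemma qfac_split:
  assumes "k \<le> n"
  shows "(\<Prod>j<k. Q ^ (n - j) - 1) * qfac Q (n - k) = qfac Q n"
  using assms
proof (induction k)
  case 0 then show ?case by simp
next
  case (Suc k)
  have e: "n - k = Suc (n - Suc k)" using Suc.prems by simp
  have "qfac Q (n - k) = qfac Q (n - Suc k) * (Q ^ (n - k) - 1)"
    unfolding qfac_def e by (simp add: e)
  have "(\<Prod>j<Suc k. Q ^ (n - j) - 1) * qfac Q (n - Suc k)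
      = (\<Prod>j<k. Q ^ (n - j) - 1) * ((Q ^ (n - k) - 1) * qfac Q (n - Suc k))"
    by (simp add: mult_ac)
  also have "\<dots> = (\<Prod>j<k. Q ^ (n - j) - 1) * qfac Q (n - k)" using \<open>qfac Q (n - k) = _\<close> by (simp add: mult_ac)
  also have "\<dots> = qfac Q n" using Suc by simp
  finally show ?case .
qed

lemma qbinom_qfac:
  assumes "Q \<ge> 2" "k \<le> n"
  shows "qbinom Q n k = qfac Q n / (qfac Q k * qfac Q (n - k))"
proof -
  have d: "(\<Prod>j<k. Q ^ (k - j) - 1) = qfac Q k" using qfac_split[of k k Q] by (simp add: qfac_def)
  have "(\<Prod>j<k. Q ^ (n - j) - 1) = qfac Q n / qfac Q (n - k)"
    using qfac_split[OF assms(2), of Q] qfac_pos[OF assms(1), of "n - k"] by (simp add: field_simps)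
  then show ?thesis using assms d unfolding qbinom_def by simp
qed

lemma qbinom_sym:
  assumes "Q \<ge> 2" "k \<le> n"
  shows "qbinom Q n k = qbinom Q n (n - k)"
  using qbinom_qfac[OF assms] qbinom_qfac[OF assms(1), of "n - k" n] assms(2)
  by (simp add: mult.commute)

lemma prod_diff_pow:
  fixes q :: nat
  assumes q: "q \<ge> 1" and "\<And>j. j < r \<Longrightarrow> b + j \<le> a"
  shows "(\<Prod>j<r. real (q ^ a - q ^ (b + j)))
    = (\<Prod>j<r. real q ^ (b + j)) * (\<Prod>j<r. real q ^ (a - (b + j)) - 1)"
proof -
  have "(\<Prod>j<r. real (q ^ a - q ^ (b + j))) = (\<Prod>j<r. real q ^ (b + j) * (real q ^ (a - (b + j)) - 1))"
  proof (rule prod.cong[OF refl])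
    fix j assume "j \<in> {..<r}"
    then have le: "b + j \<le> a" using assms by auto
    then have "q ^ (b + j) \<le> q ^ a" 
      using q by (intro power_increasing) auto
    then have "real (q ^ a - q ^ (b + j)) = real q ^ a - real q ^ (b + j)" by (simp add: of_nat_diff)
    also have "real q ^ a = real q ^ (b + j) * real q ^ (a - (b + j))"
      using le by (simp add: power_add[symmetric])
    finally show "real (q ^ a - q ^ (b + j)) = real q ^ (b + j) * (real q ^ (a - (b + j)) - 1)"
      by (simp add: algebra_simps)
  qed
  then show ?thesis by (simp add: prod.distrib)
qed


lemma termN:
  fixes q :: nat
  assumes q: "q \<ge> 2" and iK: "i \<le> K"
  shows "(\<Prod>j<i. real (q ^ K - q ^ j)) / (\<Prod>j<i. real (q ^ i - q ^ j)) = qbinom (real q) K i"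
proof -
  have n: "(\<Prod>j<i. real (q ^ K - q ^ (0 + j)))
    = (\<Prod>j<i. real q ^ (0 + j)) * (\<Prod>j<i. real q ^ (K - (0 + j)) - 1)"
    using iK q by (intro prod_diff_pow) auto
  have d: "(\<Prod>j<i. real (q ^ i - q ^ (0 + j)))
    = (\<Prod>j<i. real q ^ (0 + j)) * (\<Prod>j<i. real q ^ (i - (0 + j)) - 1)"
    using q by (intro prod_diff_pow) auto
  have pos: "(\<Prod>j<i. real q ^ (0 + j)) > 0" using q by (intro prod_pos) auto
  show ?thesis using n d pos iK q unfolding qbinom_def by simp
qed

lemma termC:
  fixes q :: nat
  assumes q: "q \<ge> 2" and i1: "1 \<le> i" and iK: "i \<le> k - s" and sk: "s \<le> k" and iS: "i \<le> s"
  shows "(\<Prod>j<s - i. real (q ^ k - q ^ (k - s + 1 + j))) / (\<Prod>j<s - i. real (q ^ s - q ^ (i + j)))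
    = real q ^ ((s - i) * (k - s + 1 - i)) * qbinom (real q) (s - 1) (i - 1)"
proof -
  let ?Q = "real q"
  let ?m = "k - s + 1"
  have n: "(\<Prod>j<s - i. real (q ^ k - q ^ (?m + j)))
    = (\<Prod>j<s - i. ?Q ^ (?m + j)) * (\<Prod>j<s - i. ?Q ^ (k - (?m + j)) - 1)"
    using q sk i1 iS by (intro prod_diff_pow) auto
  have d: "(\<Prod>j<s - i. real (q ^ s - q ^ (i + j)))
    = (\<Prod>j<s - i. ?Q ^ (i + j)) * (\<Prod>j<s - i. ?Q ^ (s - (i + j)) - 1)"
    using q by (intro prod_diff_pow) auto
  have p1: "(\<Prod>j<s - i. ?Q ^ (?m + j)) = ?Q ^ ((s - i) * (?m - i)) * (\<Prod>j<s - i. ?Q ^ (i + j))"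
  proof -
    have "(\<Prod>j<s - i. ?Q ^ (?m + j)) = (\<Prod>j<s - i. ?Q ^ (?m - i) * ?Q ^ (i + j))"
      using iK sk by (intro prod.cong[OF refl]) (simp add: power_add[symmetric] Suc_diff_le)
    also have "\<dots> = (?Q ^ (?m - i)) ^ (s - i) * (\<Prod>j<s - i. ?Q ^ (i + j))"
      by (simp add: prod.distrib)
    finally show ?thesis by (simp add: power_mult[symmetric] mult.commute)
  qed
  have p2: "(\<Prod>j<s - i. ?Q ^ (k - (?m + j)) - 1) = (\<Prod>j<s - i. ?Q ^ (s - 1 - j) - 1)"
    using sk by (intro prod.cong[OF refl]) (simp add: algebra_simps)
  have p3: "(\<Prod>j<s - i. ?Q ^ (s - (i + j)) - 1) = (\<Prod>j<s - i. ?Q ^ (s - i - j) - 1)"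
    by (intro prod.cong[OF refl]) (simp add: algebra_simps)
  have qb: "qbinom ?Q (s - 1) (s - i) = (\<Prod>j<s - i. ?Q ^ (s - 1 - j) - 1) / (\<Prod>j<s - i. ?Q ^ (s - i - j) - 1)"
    using i1 unfolding qbinom_def by simp
  have sym: "qbinom ?Q (s - 1) (i - 1) = qbinom ?Q (s - 1) (s - i)"
    using qbinom_sym[of ?Q "i - 1" "s - 1"] q i1 iS by (simp add: algebra_simps)
  have pos: "(\<Prod>j<s - i. ?Q ^ (i + j)) > 0" using q by (intro prod_pos) auto
  show ?thesis unfolding n d p1 p2 p3 sym qb using pos q by simp
qed


theorem lemma2p6:
  fixes H :: "('a::{field,finite} ^ 'n) set" and s :: nat
  defines "q \<equiv> CARD('a)" and "k \<equiv> CARD('n)"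
  assumes "1 \<le> s" and "s \<le> k"
    and "affine_subspace_dim H (k - s)" and "0 \<notin> H"
  shows "real (n_count H s) =
    (\<Sum>i=1..s. real q powi (int (s - i) * (int k - int i - int s + 1))
        * qbinom (real q) (s - 1) (i - 1) * qbinom (real q) (k - s) i)"
proof -
  note s1 = assms(3) and sk = assms(4)
  have q2: "q \<ge> 2"
  proof -
    have "card {0::'a, 1} \<le> card (UNIV::'a set)" by (rule card_mono) auto
    then show ?thesis unfolding q_def by simp
  qed
  obtain x W where Ws: "vec.subspace W" and Wd: "vec.dim W = k - s" and HW: "H = (\<lambda>w. x + w) ` W"
    using assms(5) unfolding affine_subspace_dim_def by blast
  have xW: "x \<notin> W"
  proof
    assume "x \<in> W"
    then have "- x \<in> W" using Ws vec.subspace_neg by blast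
    then have "x + - x \<in> H" unfolding HW by blast
    then show False using assms(6) by simp
  qed
  define U where "U = vec.span (insert x W)"
  have Us: "vec.subspace U" unfolding U_def by simp
  have WU: "W \<subseteq> U" unfolding U_def using vec.span_superset by blast
  have xU: "x \<in> U" unfolding U_def by (simp add: vec.span_base)
  have Ud: "vec.dim U = k - s + 1"
    using vec.dim_insert[of x W] xW Ws Wd unfolding U_def by (simp add: span_sub_eq)
  have dUNIV: "vec.dim (UNIV :: ('a^'n) set) = k"
    unfolding k_def using vec.dim_UNIV card_cart_basis by metis
  have key: "V \<inter> H = {} \<longleftrightarrow> V \<inter> U \<subseteq> W" if Vs: "vec.subspace V" for V
  proof
    assume e: "V \<inter> H = {}"
    show "V \<inter> U \<subseteq> W"
    proof
      fix y assume y: "y \<in> V \<inter> U"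
      then obtain c where c: "y - c *s x \<in> W"
        unfolding U_def vec.span_insert using Ws by (auto simp: span_sub_eq)
      show "y \<in> W"
      proof (cases "c = 0")
        case True then show ?thesis using c by simp
      next
        case False
        have e1: "inverse c *s y \<in> V" using y Vs by (simp add: vec.subspace_scale)
        have e2: "inverse c *s y = x + inverse c *s (y - c *s x)"
        proof -
          have "inverse c *s (y - c *s x) = inverse c *s y - (inverse c * c) *s x"
            by (simp only: vector_ssub_ldistrib vector_smult_assoc)
          then show ?thesis using False by simp
        qed
        have e3: "inverse c *s (y - c *s x) \<in> W" using vec.subspace_scale[OF Ws c, of "inverse c"] .
        have "inverse c *s y \<in> H" unfolding HW using e2 e3 by (rule image_eqI)
        then have "inverse c *s y \<in> V \<inter> H" using \<open>inverse c *s y \<in> V\<close> by blast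
        then show ?thesis using e by blast
      qed
    qed
  next
    assume e: "V \<inter> U \<subseteq> W"
    show "V \<inter> H = {}"
    proof (rule ccontr)
      assume "V \<inter> H \<noteq> {}"
      then obtain w where w: "w \<in> W" "x + w \<in> V" unfolding HW by auto
      have "w \<in> U" using WU w by blast
      then have "x + w \<in> U" using vec.subspace_add[OF Us xU] by blast
      then have "x + w \<in> W" using e w by auto
      then have "(x + w) - w \<in> W" using vec.subspace_diff[OF Ws _ w(1)] by blast
      then show False using xW by simp
    qed
  qed
  define Fam where "Fam = {V :: ('a^'n) set. vec.subspace V \<and> vec.dim V = s \<and> V \<inter> U \<subseteq> W}"
  have nF: "n_count H s = card Fam"
    unfolding n_count_def Fam_def using key by (intro arg_cong[where f=card]) blast
  define Tset where "Tset = {T :: ('a^'n) set. vec.subspace T \<and> T \<subseteq> W \<and> vec.dim T \<le> s}"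
  define c where "c t = (\<Prod>j<s - t. real (q ^ k - q ^ (k - s + 1 + j))) / (\<Prod>j<s - t. real (q ^ s - q ^ (t + j)))" for t
  define N where "N t = (\<Prod>j<t. real (q ^ (k - s) - q ^ j)) / (\<Prod>j<t. real (q ^ t - q ^ j))" for t
  have finFam: "finite Fam" by (rule finite_subset[OF subset_UNIV]) simp
  have finT: "finite Tset" by (rule finite_subset[OF subset_UNIV]) simp
  have mapsF: "(\<lambda>V. V \<inter> U) ` Fam \<subseteq> Tset"
  proof
    fix T assume "T \<in> (\<lambda>V. V \<inter> U) ` Fam"
    then obtain V where V: "V \<in> Fam" "T = V \<inter> U" by blast
    have "vec.dim T \<le> vec.dim V" using V(2) vec.dim_subset by blast
    then show "T \<in> Tset" using V Us unfolding Fam_def Tset_def by (auto simp: vec.subspace_inter)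
  qed
  have cfib: "real (card {V\<in>Fam. V \<inter> U = T}) = c (vec.dim T)" if T: "T \<in> Tset" for T
  proof -
    have Ts: "vec.subspace T" and TW: "T \<subseteq> W" and Td: "vec.dim T \<le> s" using T unfolding Tset_def by auto
    have TU: "T \<subseteq> U" using TW WU by auto
    have eq: "{V\<in>Fam. V \<inter> U = T} = {V. vec.subspace V \<and> V \<subseteq> UNIV \<and> vec.dim V = vec.dim T + (s - vec.dim T) \<and> V \<inter> U = T}"
      unfolding Fam_def using TW Td by auto
    have cnt: "card {V\<in>Fam. V \<inter> U = T} * (\<Prod>j<s - vec.dim T. q ^ (vec.dim T + (s - vec.dim T)) - q ^ (vec.dim T + j))
        = (\<Prod>j<s - vec.dim T. q ^ k - q ^ (k - s + 1 + j))"
      unfolding eq q_def using count_subspaces[OF vec.subspace_UNIV Us subset_UNIV Ts TU, of "s - vec.dim T"] Ud dUNIV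
      by simp
    have pos: "(\<Prod>j<s - vec.dim T. real (q ^ s - q ^ (vec.dim T + j))) \<noteq> 0"
    proof -
      have "q ^ (vec.dim T + j) < q ^ s" if "j < s - vec.dim T" for j
        using q2 that by (intro power_strict_increasing) auto
      then show ?thesis by (simp add: prod_zero_iff) (meson lessThan_iff not_le)
    qed
    have "real (card {V\<in>Fam. V \<inter> U = T}) * (\<Prod>j<s - vec.dim T. real (q ^ s - q ^ (vec.dim T + j)))
        = (\<Prod>j<s - vec.dim T. real (q ^ k - q ^ (k - s + 1 + j)))"
      using arg_cong[OF cnt, of real] Td by (simp add: of_nat_prod)
    then show ?thesis unfolding c_def using pos by (simp add: field_simps)
  qed
  have cN: "real (card {T\<in>Tset. vec.dim T = t}) = N t" if t: "t \<in> {0..s}" for t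
  proof -
    have z: "vec.subspace {0::'a^'n}" using vec.subspace_span[of "{}"] by simp
    have zd: "vec.dim {0::'a^'n} = 0" using vec.dim_span[of "{}"] by simp
    have eq: "{T\<in>Tset. vec.dim T = t} = {V. vec.subspace V \<and> V \<subseteq> W \<and> vec.dim V = vec.dim {0::'a^'n} + t \<and> V \<inter> {0} = {0}}"
      unfolding Tset_def zd using t by (auto simp: vec.subspace_0)
    have "{0} \<subseteq> W" using Ws by (simp add: vec.subspace_0)
    then have cnt: "card {T\<in>Tset. vec.dim T = t} * (\<Prod>j<t. q ^ t - q ^ j) = (\<Prod>j<t. q ^ (k - s) - q ^ j)"
      unfolding eq q_def using count_subspaces[OF Ws z _ z order_refl, of t] Wd zd by simp
    have pos: "(\<Prod>j<t. real (q ^ t - q ^ j)) \<noteq> 0"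
    proof -
      have "q ^ j < q ^ t" if "j < t" for j
        using q2 that by (intro power_strict_increasing) auto
      then show ?thesis by (simp add: prod_zero_iff) (meson lessThan_iff not_le)
    qed
    have "real (card {T\<in>Tset. vec.dim T = t}) * (\<Prod>j<t. real (q ^ t - q ^ j)) = (\<Prod>j<t. real (q ^ (k - s) - q ^ j))"
      using arg_cong[OF cnt, of real] by (simp add: of_nat_prod)
    then show ?thesis unfolding N_def using pos by (simp add: field_simps)
  qed
  have mapsT: "vec.dim ` Tset \<subseteq> {0..s}" unfolding Tset_def by auto
  have "real (n_count H s) = real (\<Sum>T\<in>Tset. card {V\<in>Fam. V \<inter> U = T})"
    unfolding nF using card_fibers[OF finFam finT mapsF] by simp
  also have "\<dots> = (\<Sum>T\<in>Tset. c (vec.dim T))" using cfib by (simp add: of_nat_sum)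
  also have "\<dots> = (\<Sum>t\<in>{0..s}. real (card {T\<in>Tset. vec.dim T = t}) * c t)"
    by (rule sum_fun_comp[OF finT _ mapsT]) simp
  also have "\<dots> = (\<Sum>t\<in>{0..s}. N t * c t)" using cN by simp
  also have "\<dots> = (\<Sum>t\<in>{1..s}. N t * c t)"
  proof -
    have "c 0 = 0"
    proof -
      have "s - 1 \<in> {..<s - 0}" using s1 by auto
      moreover have "real (q ^ k - q ^ (k - s + 1 + (s - 1))) = 0" using s1 sk by simp
      ultimately show ?thesis unfolding c_def by (metis (no_types, lifting) div_0 prod_zero_iff finite_lessThan)
    qed
    moreover have "{0..s} = insert 0 {1..s}" by auto
    ultimately show ?thesis by simp
  qed
  also have "\<dots> = (\<Sum>i=1..s. real q powi (int (s - i) * (int k - int i - int s + 1))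
        * qbinom (real q) (s - 1) (i - 1) * qbinom (real q) (k - s) i)"
  proof (rule sum.cong[OF refl])
    fix i assume i: "i \<in> {1..s}"
    show "N i * c i = real q powi (int (s - i) * (int k - int i - int s + 1))
        * qbinom (real q) (s - 1) (i - 1) * qbinom (real q) (k - s) i"
    proof (cases "i \<le> k - s")
      case True
      have ex: "int (s - i) * (int k - int i - int s + 1) = int ((s - i) * (k - s + 1 - i))"
        using True i sk by (simp add: of_nat_diff)
      show ?thesis unfolding ex power_int_of_nat
        using termN[OF q2 True] termC[OF q2 _ True sk] i unfolding N_def c_def by simp
    next
      case False
      have "N i = 0"
      proof -
        have "k - s \<in> {..<i}" using False by auto
        moreover have "real (q ^ (k - s) - q ^ (k - s)) = 0" by simp
        ultimately show ?thesis unfolding N_def by (metis (no_types, lifting) div_0 prod_zero_iff finite_lessThan)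
      qed
      moreover have "qbinom (real q) (k - s) i = 0" using False unfolding qbinom_def by simp
      ultimately show ?thesis by simp
    qed
  qed
  finally show ?thesis .
qed

end
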